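(* Let $\mathfrak{g}$ be a finite-dimensional real Lie algebra, $h\colon\mathfrak{g}^{*}\to\mathbb{R}$ smooth, and $\eta(q,p) := Dh(-\operatorname{ad}_{q}^{*}p)\in\mathfrak{g}$ for $(q,p)\in\mathfrak{g}\times\mathfrak{g}^{*}$. Consider the system $$\dot q = \operatorname{ad}_{\eta(q,p)}q,\qquad \dot p = -\operatorname{ad}_{\eta(q,p)}^{*}p$$ (the canonical Hamiltonian system on $T^{*}\mathfrak{g}$ with Hamiltonian $H(q,p) = h(-\operatorname{ad}_q^{*}p)$). Let $\kappa(x,y) = \operatorname{tr}(\operatorname{ad}_x\circ\operatorname{ad}_y)$ be the Killing form of $\mathfrak{g}$. Then $\kappa(q,q)$ is an invariant (conserved quantity) of this system.
   Context: $\operatorname{ad}_{x}y=[x,y]$, $\operatorname{ad}_{x}^{*}$ is its dual: $\langle \operatorname{ad}_{x}^{*}\alpha, y\rangle = \langle \alpha,[x,y]\rangle$. For smooth $f\colon\mathfrak{g}^{*}\to\mathbb{R}$, $Df(\mu)\in\mathfrak{g}$ is defined by $\langle\delta\mu, Df(\mu)\rangle = \frac{d}{ds}\big|_{s=0}f(\mu+s\delta\mu)$. *)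

theory Defs
  imports "HOL-Analysis.Analysis"
begin

definition lie_bracket :: "('a::euclidean_space \<Rightarrow> 'a \<Rightarrow> 'a) \<Rightarrow> bool" where
  "lie_bracket br \<longleftrightarrow> bilinear br \<and> (\<forall>x. br x x = 0) \<and>
     (\<forall>x y z. br x (br y z) + br y (br z x) + br z (br x y) = 0)"

text \<open>The dual space g* is identified with g via the inner product:
  the functional alpha corresponds to (\<lambda>y. alpha \<bullet> y).\<close>

definition ad_star :: "('a::euclidean_space \<Rightarrow> 'a \<Rightarrow> 'a) \<Rightarrow> 'a \<Rightarrow> 'a \<Rightarrow> 'a" where
  "ad_star br x \<alpha> = adjoint (br x) \<alpha>"

definition trace_lin :: "('a::euclidean_space \<Rightarrow> 'a) \<Rightarrow> real" where
  "trace_lin f = (\<Sum>b\<in>Basis. f b \<bullet> b)"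

definition killing :: "('a::euclidean_space \<Rightarrow> 'a \<Rightarrow> 'a) \<Rightarrow> 'a \<Rightarrow> 'a \<Rightarrow> real" where
  "killing br x y = trace_lin (br x \<circ> br y)"

fun Ck :: "nat \<Rightarrow> ('a::euclidean_space \<Rightarrow> real) \<Rightarrow> bool" where
  "Ck 0 f = continuous_on UNIV f"
| "Ck (Suc k) f = ((\<forall>x. f differentiable (at x)) \<and>
      (\<forall>b\<in>Basis. Ck k (\<lambda>x. frechet_derivative f (at x) b)))"

definition smooth :: "('a::euclidean_space \<Rightarrow> real) \<Rightarrow> bool" where
  "smooth f \<longleftrightarrow> (\<forall>k. Ck k f)"

text \<open>Dh(mu) in g (= gradient): <delta, Dh mu> = d/ds h(mu + s delta) at s = 0.\<close>
definition Dh :: "('a::euclidean_space \<Rightarrow> real) \<Rightarrow> 'a \<Rightarrow> 'a" where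
  "Dh h \<mu> = (\<Sum>b\<in>Basis. frechet_derivative h (at \<mu>) b *\<^sub>R b)"

end

theory Submission
  imports Defs
begin

lemma trace_cyc:
  fixes f g :: "'a::euclidean_space \<Rightarrow> 'a"
  assumes f: "linear f" and g: "linear g"
  shows "trace_lin (f \<circ> g) = trace_lin (g \<circ> f)"
proof -
  have A: "f (g b) \<bullet> b = (\<Sum>c\<in>Basis. (g b \<bullet> c) * (f c \<bullet> b))"
    if "linear f" for f g :: "'a \<Rightarrow> 'a" and b
  proof -
    have "f (g b) = f (\<Sum>c\<in>Basis. (g b \<bullet> c) *\<^sub>R c)" by (simp add: euclidean_representation)
    also have "\<dots> = (\<Sum>c\<in>Basis. (g b \<bullet> c) *\<^sub>R f c)"
      using that by (simp add: linear_sum linear_scale)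
    finally show ?thesis by (simp add: inner_sum_left)
  qed
  have "trace_lin (f \<circ> g) = (\<Sum>b\<in>Basis. \<Sum>c\<in>Basis. (g b \<bullet> c) * (f c \<bullet> b))"
    unfolding trace_lin_def using A[OF f] by simp
  also have "\<dots> = (\<Sum>c\<in>Basis. \<Sum>b\<in>Basis. (f c \<bullet> b) * (g b \<bullet> c))"
    by (subst sum.swap) (simp add: mult.commute)
  also have "\<dots> = trace_lin (g \<circ> f)"
    unfolding trace_lin_def using A[OF g] by simp
  finally show ?thesis .
qed

lemma trace_diff:
  "trace_lin (\<lambda>v. f v - g v) = trace_lin f - trace_lin g"
  unfolding trace_lin_def by (simp add: inner_diff_left sum_subtractf)

lemma killing_sym:
  assumes lie: "lie_bracket br"
  shows "killing br x y = killing br y x"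
proof -
  have "bilinear br" using lie by (simp add: lie_bracket_def)
  hence "linear (br z)" for z by (simp add: bilinear_def)
  thus ?thesis unfolding killing_def by (simp add: trace_cyc)
qed

lemma jac:
  assumes lie: "lie_bracket br"
  shows "br (br x y) w = br x (br y w) - br y (br x w)"
proof -
  have bl: "bilinear br" and alt: "\<And>x. br x x = 0"
    and J: "\<And>x y z. br x (br y z) + br y (br z x) + br z (br x y) = 0"
    using lie by (auto simp: lie_bracket_def)
  have anti: "br a b = - br b a" for a b
  proof -
    have "br (a+b) (a+b) = 0" by (rule alt)
    hence "br a b + br b a = 0"
      using alt[of a] alt[of b] by (simp add: bilinear_ladd[OF bl] bilinear_radd[OF bl] add.commute)
    thus ?thesis by (simp add: eq_neg_iff_add_eq_0)
  qed
  have "br x (br y w) + br y (br w x) + br w (br x y) = 0" by (rule J)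
  moreover have "br y (br w x) = - br y (br x w)"
    by (simp add: anti[of w x] bilinear_rneg[OF bl])
  moreover have "br w (br x y) = - br (br x y) w" by (rule anti)
  ultimately show ?thesis by (simp add: algebra_simps)
qed

lemma killing_inv:
  assumes lie: "lie_bracket br"
  shows "killing br (br x y) z + killing br y (br x z) = 0"
proof -
  have bl: "bilinear br" using lie by (simp add: lie_bracket_def)
  hence lin: "linear (br z)" for z by (simp add: bilinear_def)
  have linc: "linear (br a \<circ> br b)" for a b using lin linear_compose by blast
  have "killing br (br x y) z = trace_lin (\<lambda>v. br x (br y (br z v)) - br y (br x (br z v)))"
    unfolding killing_def by (simp add: jac[OF lie] o_def)
  also have "\<dots> = trace_lin (br x \<circ> (br y \<circ> br z)) - trace_lin (br y \<circ> br x \<circ> br z)"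
    by (subst trace_diff) (simp add: o_def)
  finally have 1: "killing br (br x y) z = trace_lin (br x \<circ> (br y \<circ> br z)) - trace_lin (br y \<circ> br x \<circ> br z)" .
  have "killing br y (br x z) = trace_lin (\<lambda>v. br y (br x (br z v) - br z (br x v)))"
    unfolding killing_def by (simp add: jac[OF lie] o_def)
  also have "\<dots> = trace_lin (\<lambda>v. br y (br x (br z v)) - br y (br z (br x v)))"
    using lin[of y] by (simp add: linear_diff)
  also have "\<dots> = trace_lin (br y \<circ> br x \<circ> br z) - trace_lin ((br y \<circ> br z) \<circ> br x)"
    by (subst trace_diff) (simp add: o_def)
  finally have 2: "killing br y (br x z) = trace_lin (br y \<circ> br x \<circ> br z) - trace_lin ((br y \<circ> br z) \<circ> br x)" .
  have "trace_lin (br x \<circ> (br y \<circ> br z)) = trace_lin ((br y \<circ> br z) \<circ> br x)"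
    using trace_cyc[OF lin linc] .
  with 1 2 show ?thesis by simp
qed

lemma killing_zero:
  assumes lie: "lie_bracket br"
  shows "killing br (br x y) y = 0"
  using killing_inv[OF lie, of x y y] killing_sym[OF lie, of y "br x y"] by simp

lemma killing_bilinear:
  assumes lie: "lie_bracket br"
  shows "bilinear (killing br)"
proof -
  have bl: "bilinear br" using lie by (simp add: lie_bracket_def)
  hence lin: "linear (br z)" for z by (simp add: bilinear_def)
  have linl: "linear (\<lambda>x. br x z)" for z using bl by (simp add: bilinear_def)
  have L: "linear (\<lambda>u. killing br u v)" for v
    unfolding killing_def trace_lin_def o_def
    by (rule linearI)
       (simp_all add: linear_add[OF linl] linear_scale[OF linl] inner_add_left sum.distrib
         sum_distrib_left)
  have R: "linear (\<lambda>v. killing br u v)" for u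
    unfolding killing_def trace_lin_def o_def
    by (rule linearI)
       (simp_all add: linear_add[OF linl] linear_scale[OF linl] linear_add[OF lin]
         linear_scale[OF lin] inner_add_left sum.distrib sum_distrib_left)
  show ?thesis unfolding bilinear_def using L R by blast
qed

theorem proposition4p2:
  fixes br :: "'a::euclidean_space \<Rightarrow> 'a \<Rightarrow> 'a"
    and h :: "'a \<Rightarrow> real"
    and q p :: "real \<Rightarrow> 'a"
    and I :: "real set"
  assumes lie: "lie_bracket br"
    and smooth_h: "smooth h"
    and I: "is_interval I"
    and q_eq: "\<And>t. t \<in> I \<Longrightarrow>
        (q has_vector_derivative br (Dh h (- ad_star br (q t) (p t))) (q t)) (at t within I)"
    and p_eq: "\<And>t. t \<in> I \<Longrightarrow>
        (p has_vector_derivative - ad_star br (Dh h (- ad_star br (q t) (p t))) (p t)) (at t within I)"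
    and s: "s \<in> I" and t: "t \<in> I"
  shows "killing br (q s) (q s) = killing br (q t) (q t)"
proof -
  have bb: "bounded_bilinear (killing br)"
    using killing_bilinear[OF lie] bilinear_conv_bounded_bilinear by blast
  have D: "((\<lambda>x. killing br (q x) (q x)) has_derivative (\<lambda>h. 0)) (at x within I)" if x: "x \<in> I" for x
  proof -
    define v where "v = br (Dh h (- ad_star br (q x) (p x))) (q x)"
    have qd: "(q has_derivative (\<lambda>h. h *\<^sub>R v)) (at x within I)"
      using q_eq[OF x] unfolding v_def has_vector_derivative_def .
    have "((\<lambda>x. killing br (q x) (q x)) has_derivative
        (\<lambda>h. killing br (q x) (h *\<^sub>R v) + killing br (h *\<^sub>R v) (q x))) (at x within I)"
      by (rule bounded_bilinear.FDERIV[OF bb qd qd])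
    moreover have "killing br (q x) (h *\<^sub>R v) + killing br (h *\<^sub>R v) (q x) = 0" for h
    proof -
      have "killing br v (q x) = 0" unfolding v_def by (rule killing_zero[OF lie])
      moreover have "killing br (q x) v = 0" using calculation killing_sym[OF lie] by metis
      ultimately show ?thesis
        using bounded_bilinear.scaleR_left[OF bb] bounded_bilinear.scaleR_right[OF bb] by simp
    qed
    ultimately show ?thesis by simp
  qed
  obtain c where "\<forall>x\<in>I. killing br (q x) (q x) = c"
    using has_derivative_zero_constant[OF is_interval_convex[OF I] D] by blast
  with s t show ?thesis by simp
qed

end
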